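(* There is a constant $C>0$ such that $f^{\Delta_n}_{d_n}=O(C^{d_n})$ as $n\to\infty$.
   Context: For a squarefree positive integer $k$ let $P(k)$ be its set of prime factors ($P(1)=\emptyset$). $\Delta_n$ is the abstract simplicial complex $\{P(k):1\le k\le n,\ k\text{ squarefree}\}$; a $d$-simplex is a member of cardinality $d+1$, $d_n=\dim\Delta_n$ is the largest such $d$, and $f^{\Delta_n}_{d_n}$ is the number of $d_n$-simplices of $\Delta_n$ (i.e. the number of squarefree $m\le n$ with exactly $d_n+1$ prime factors). *)

theory Defs
  imports "HOL-Computational_Algebra.Squarefree" "HOL-Library.Landau_Symbols"
begin

definition Delta :: "nat \<Rightarrow> nat set set" where
  "Delta n = {prime_factors k | k. 1 \<le> k \<and> k \<le> n \<and> squarefree k}"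

text \<open>Dimension d_n: largest d such that Delta_n has a member of cardinality d+1
  (for n = 1 the true value -1 is truncated to 0; irrelevant asymptotically).\<close>
definition dimDelta :: "nat \<Rightarrow> nat" where
  "dimDelta n = Max (card ` Delta n) - 1"

definition ftop :: "nat \<Rightarrow> nat" where
  "ftop n = card {s \<in> Delta n. card s = dimDelta n + 1}"

end

theory Submission
  imports Defs "HOL-Library.Infinite_Set"
begin

definition pr :: "nat \<Rightarrow> nat" where "pr = enumerate {p. prime p}"

lemma inf_primes: "infinite {p::nat. prime p}"
  using primes_infinite by simp

lemma pr_prime: "prime (pr i)"
  unfolding pr_def using enumerate_in_set[OF inf_primes] by simp

lemma pr_mono: "i < j \<Longrightarrow> pr i < pr j"
  unfolding pr_def using enumerate_mono[OF _ inf_primes] by simp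

lemma pr_mono_iff: "pr i < pr j \<longleftrightarrow> i < j"
  using pr_mono by (cases i j rule: linorder_cases) (auto dest: pr_mono)

lemma pr_inj: "inj pr"
  by (rule injI) (metis less_irrefl linorder_cases pr_mono)

lemma pr_surj: "prime p \<Longrightarrow> \<exists>i. pr i = p"
proof -
  assume "prime p"
  then have "p \<in> range (enumerate {p::nat. prime p})"
    using bij_enumerate[OF inf_primes] unfolding bij_betw_def by simp
  then obtain i where "p = enumerate {p::nat. prime p} i" by (rule rangeE)
  then have "pr i = p" unfolding pr_def by simp
  then show ?thesis by (rule exI)
qed

lemma pr_ge: "pr i \<ge> i + 2"
proof (induction i)
  case 0
  have "2 \<le> pr 0" using pr_prime[of 0] by (rule prime_ge_2_nat)
  then show ?case by simp
next
  case (Suc i) then show ?case using pr_mono[of i "Suc i"] by simp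
qed

lemma prod_primes_dvd:
  fixes N :: nat
  assumes "finite A" "\<And>p. p \<in> A \<Longrightarrow> prime p \<and> p dvd N"
  shows "\<Prod>A dvd N"
  using assms
proof (induction A rule: finite_induct)
  case empty then show ?case by simp
next
  case (insert p A)
  have pA: "prime p" "p dvd N" using insert.prems by auto
  have "\<not> p dvd \<Prod>A"
  proof
    assume "p dvd \<Prod>A"
    then obtain a where "a \<in> A" "p dvd a"
      using prime_dvd_prod_iff[OF insert.hyps(1) pA(1), of id] by auto
    then have "p = a" using insert.prems primes_dvd_imp_eq pA(1) by blast
    with \<open>a \<in> A\<close> insert.hyps(2) show False by simp
  qed
  then have "coprime p (\<Prod>A)" using prime_imp_coprime pA(1) by blast
  moreover have "\<Prod>A dvd N" using insert by auto
  ultimately have "p * \<Prod>A dvd N" using pA(2) divides_mult by blast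
  then show ?case using insert.hyps by simp
qed

lemma binom_odd_le: "(2*m+1) choose m \<le> 4^m"
proof -
  have "(2*m+1) choose m = (2*m+1) choose (m+1)"
    by (subst binomial_symmetric) auto
  then have "2 * ((2*m+1) choose m) = (\<Sum>k\<in>{m, m+1}. (2*m+1) choose k)" by simp
  also have "\<dots> \<le> (\<Sum>k\<le>2*m+1. (2*m+1) choose k)"
    by (intro sum_mono2) auto
  also have "\<dots> = 2^(2*m+1)" by (rule choose_row_sum)
  also have "\<dots> = 2 * 4^m" by (simp add: power_mult)
  finally show ?thesis by simp
qed

lemma primes_mid_dvd:
  "\<Prod>{p. prime p \<and> m+1 < p \<and> p \<le> 2*m+1} dvd ((2*m+1) choose m)"
proof (rule prod_primes_dvd)
  show "finite {p. prime p \<and> m+1 < p \<and> p \<le> 2*m+1}" by auto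
next
  fix p assume p: "p \<in> {p. prime p \<and> m+1 < p \<and> p \<le> 2*m+1}"
  then have pp: "prime p" by simp
  have eq: "fact m * fact (2*m+1 - m) * ((2*m+1) choose m) = (fact (2*m+1) :: nat)"
    by (rule binomial_fact_lemma) simp
  have "p dvd fact (2*m+1)" using p prime_dvd_fact_iff[OF pp] by blast
  then have "p dvd fact m * fact (2*m+1 - m) * ((2*m+1) choose m)" by (simp only: eq)
  moreover have "\<not> p dvd fact m" using p prime_dvd_fact_iff[OF pp] by simp
  moreover have "\<not> p dvd fact (2*m+1-m)"
  proof -
    have "2*m+1-m = m+1" by simp
    then show ?thesis using p prime_dvd_fact_iff[OF pp] by (simp only:) simp
  qed
  ultimately have "p dvd ((2*m+1) choose m)" using pp by (simp add: prime_dvd_mult_iff)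
  then show "prime p \<and> p dvd ((2*m+1) choose m)" using pp by simp
qed

lemma prod_primes_le: "\<Prod>{p::nat. prime p \<and> p \<le> n} \<le> 4^n"
proof (induction n rule: less_induct)
  case (less n)
  show ?case
  proof (cases "n \<le> 2")
    case True
    show ?thesis
    proof (cases "n = 0")
      case True
      then have e: "{p::nat. prime p \<and> p \<le> n} = {}" using prime_ge_2_nat by fastforce
      show ?thesis unfolding e by simp
    next
      case n0: False
      have "{p::nat. prime p \<and> p \<le> n} \<subseteq> {2}"
        using True prime_ge_2_nat by (auto simp: le_antisym)
      then have "\<Prod>{p::nat. prime p \<and> p \<le> n} dvd \<Prod>{2::nat}"
        by (intro prod_dvd_prod_subset) auto
      then have "\<Prod>{p::nat. prime p \<and> p \<le> n} \<le> 2" by (auto dest: dvd_imp_le)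
      also have "(2::nat) \<le> 4^1" by simp
      also have "(4::nat)^1 \<le> 4^n" using n0 by (intro power_increasing) auto
      finally show ?thesis .
    qed
  next
    case False
    show ?thesis
    proof (cases "even n")
      case True
      have "{p::nat. prime p \<and> p \<le> n} = {p. prime p \<and> p \<le> n - 1}"
      proof -
        have "\<not> prime n" using True False prime_odd_nat by force
        then have "prime p \<and> p \<le> n \<longleftrightarrow> prime p \<and> p \<le> n - 1" for p
          by (cases "p = n") auto
        then show ?thesis by blast
      qed
      also have "\<Prod>\<dots> \<le> 4^(n-1)" using less False by simp
      also have "\<dots> \<le> 4^n" by simp
      finally show ?thesis .
    next
      case odd: False
      then obtain m where m: "n = 2*m+1" by (metis oddE)
      have m1: "m \<ge> 1" using False m by simp
      have split: "{p::nat. prime p \<and> p \<le> n} = {p. prime p \<and> p \<le> m+1} \<union> {p. prime p \<and> m+1 < p \<and> p \<le> 2*m+1}"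
        using m by auto
      have "\<Prod>{p::nat. prime p \<and> p \<le> n} = \<Prod>{p. prime p \<and> p \<le> m+1} * \<Prod>{p. prime p \<and> m+1 < p \<and> p \<le> 2*m+1}"
        unfolding split by (subst prod.union_disjoint) auto
      also have "\<dots> \<le> 4^(m+1) * 4^m"
      proof (rule mult_le_mono)
        have "m + 1 < n" using m m1 by simp
        then show "\<Prod>{p. prime p \<and> p \<le> m+1} \<le> 4^(m+1)" by (rule less.IH)
        have "\<Prod>{p. prime p \<and> m+1 < p \<and> p \<le> 2*m+1} \<le> (2*m+1) choose m"
          using primes_mid_dvd by (rule dvd_imp_le) (simp add: zero_less_binomial)
        also have "\<dots> \<le> 4^m" by (rule binom_odd_le)
        finally show "\<Prod>{p. prime p \<and> m+1 < p \<and> p \<le> 2*m+1} \<le> 4^m" .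
      qed
      also have "\<dots> = 4^n" using m by (simp add: power_add mult_2 flip: power_mult_distrib)
      finally show ?thesis .
    qed
  qed
qed

lemma Suc_div_eq: "(q::nat) > 0 \<Longrightarrow> Suc n div q = n div q + (if q dvd Suc n then 1 else 0)"
  using div_Suc[of n q] by (auto simp: dvd_eq_mod_eq_0)

lemma pow_gt: "prime (p::nat) \<Longrightarrow> n < p ^ n"
proof -
  assume "prime p"
  then have "2 \<le> p" by (rule prime_ge_2_nat)
  have "n < 2 ^ n" by (rule less_exp)
  also have "2^n \<le> p^n" using \<open>2 \<le> p\<close> by (rule power_mono) simp
  finally show ?thesis .
qed

lemma mult_le_self: "prime (p::nat) \<Longrightarrow> x > 0 \<Longrightarrow> multiplicity p x \<le> x"
proof -
  assume p: "prime p" and x: "x > 0"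
  have "p ^ multiplicity p x dvd x" by (rule multiplicity_dvd)
  then have "p ^ multiplicity p x \<le> x" using x by (rule dvd_imp_le)
  moreover have "multiplicity p x < p ^ multiplicity p x" using p by (rule pow_gt)
  ultimately show ?thesis by simp
qed

lemma card_pow_dvd:
  assumes p: "prime (p::nat)"
  shows "card {i \<in> {1..Suc n}. p ^ i dvd Suc n} = multiplicity p (Suc n)"
proof -
  have "{i \<in> {1..Suc n}. p ^ i dvd Suc n} = {1..multiplicity p (Suc n)}"
  proof -
    have "multiplicity p (Suc n) \<le> Suc n" using p by (intro mult_le_self) auto
    moreover have iff: "p ^ i dvd Suc n \<longleftrightarrow> i \<le> multiplicity p (Suc n)" for i
      using p by (intro power_dvd_iff_le_multiplicity) auto
    ultimately show ?thesis by (simp only: iff) auto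
  qed
  then show ?thesis by simp
qed

lemma legendre:
  assumes p: "prime (p::nat)"
  shows "multiplicity p (fact n) = (\<Sum>i\<in>{1..n}. n div p^i)"
proof (induction n)
  case 0 then show ?case by simp
next
  case (Suc n)
  have pos: "\<And>i. p ^ i > 0" using p prime_gt_0_nat by simp
  have "multiplicity p (fact (Suc n) :: nat) = multiplicity p (Suc n * fact n)" by simp
  also have "\<dots> = multiplicity p (Suc n) + multiplicity p (fact n :: nat)"
    using p by (intro prime_elem_multiplicity_mult_distrib) auto
  also have "multiplicity p (Suc n) = (\<Sum>i\<in>{1..Suc n}. if p^i dvd Suc n then 1 else 0)"
  proof -
    have "(\<Sum>i\<in>{1..Suc n}. if p^i dvd Suc n then 1 else 0) = (\<Sum>i\<in>{i \<in> {1..Suc n}. p ^ i dvd Suc n}. 1::nat)"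
      by (rule sum.inter_filter[symmetric]) simp
    also have "\<dots> = card {i \<in> {1..Suc n}. p ^ i dvd Suc n}" by simp
    finally show ?thesis using card_pow_dvd[OF p, of n] by simp
  qed
  also have "multiplicity p (fact n :: nat) = (\<Sum>i\<in>{1..Suc n}. n div p^i)"
  proof -
    have "n div p ^ Suc n = 0" using pow_gt[OF p, of "Suc n"] by simp
    then show ?thesis using Suc.IH by simp
  qed
  also have "(\<Sum>i\<in>{1..Suc n}. if p^i dvd Suc n then 1 else 0) + (\<Sum>i\<in>{1..Suc n}. n div p^i)
      = (\<Sum>i\<in>{1..Suc n}. Suc n div p^i)"
    by (subst sum.distrib[symmetric]) (intro sum.cong refl, simp add: Suc_div_eq[OF pos])
  finally show ?case .
qed

lemma mult_central:
  assumes p: "prime (p::nat)"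
  shows "multiplicity p ((2*m) choose m) + 2 * (\<Sum>i\<in>{1..2*m}. m div p^i) = (\<Sum>i\<in>{1..2*m}. (2*m) div p^i)"
proof -
  have eq: "fact m * fact (2*m - m) * ((2*m) choose m) = (fact (2*m) :: nat)"
    by (rule binomial_fact_lemma) simp
  have "2*m - m = m" by simp
  then have eq2: "fact m * fact m * ((2*m) choose m) = (fact (2*m) :: nat)" using eq by simp
  have nz: "fact m \<noteq> (0::nat)" "((2*m) choose m) \<noteq> 0" by (auto simp: zero_less_binomial)
  have "multiplicity p (fact (2*m) :: nat) = multiplicity p (fact m * fact m * ((2*m) choose m) :: nat)"
    using eq2 by simp
  also have "\<dots> = multiplicity p (fact m :: nat) + multiplicity p (fact m :: nat) + multiplicity p ((2*m) choose m)"
    using p nz by (simp add: prime_elem_multiplicity_mult_distrib)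
  finally have A: "multiplicity p (fact (2*m) :: nat) = 2 * multiplicity p (fact m :: nat) + multiplicity p ((2*m) choose m)"
    by simp
  have B: "multiplicity p (fact m :: nat) = (\<Sum>i\<in>{1..2*m}. m div p^i)"
  proof -
    have "(\<Sum>i\<in>{1..2*m}. m div p^i) = (\<Sum>i\<in>{1..m}. m div p^i) + (\<Sum>i\<in>{m<..2*m}. m div p^i)"
    proof -
      have "{1..2*m} = {1..m} \<union> {m<..2*m}" by auto
      then show ?thesis by (simp add: sum.union_disjoint ivl_disj_int)
    qed
    also have "(\<Sum>i\<in>{m<..2*m}. m div p^i) = 0"
    proof (intro sum.neutral ballI)
      fix i assume "i \<in> {m<..2*m}"
      then have "m < i" by simp
      also have "i < p^i" using p by (rule pow_gt)
      finally show "m div p^i = 0" by simp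
    qed
    finally show ?thesis using legendre[OF p, of m] by simp
  qed
  have L: "multiplicity p (fact (2*m) :: nat) = (\<Sum>i\<in>{1..2*m}. (2*m) div p^i)" by (rule legendre[OF p])
  show ?thesis using A B L by linarith
qed

lemma central_mult_bound:
  assumes p: "prime (p::nat)" and m: "m \<ge> 1"
  shows "p ^ multiplicity p ((2*m) choose m) \<le> 2*m"
proof -
  have p2: "p \<ge> 2" using p by (rule prime_ge_2_nat)
  obtain e where e: "p^e \<le> 2*m" "2*m < p^(e+1)" using ex_power_ivl1[OF p2, of "2*m"] m by auto
  have tm: "(2*m) div p^i \<le> 2 * (m div p^i) + (if i \<le> e then 1 else 0)" for i
  proof (cases "i \<le> e")
    case True
    have "p^i > 0" using p2 by simp
    then have "(2*m) div p^i \<le> 2 * (m div p^i) + 1"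
    proof -
      assume q: "p^i > 0"
      define q where "q = p^i"
      have "m = m div q * q + m mod q" by simp
      moreover have "m mod q < q" using q q_def by simp
      ultimately have "2*m < 2*(m div q * q) + 2*q" by linarith
      then have "2*m < (2*(m div q) + 2) * q" by (simp add: algebra_simps)
      then have "2*m div q < 2*(m div q) + 2" by (rule less_mult_imp_div_less)
      then show ?thesis unfolding q_def by simp
    qed
    then show ?thesis using True by simp
  next
    case False
    then have "p^(e+1) \<le> p^i" using p2 by (intro power_increasing) auto
    then have "2*m < p^i" using e by simp
    then show ?thesis by simp
  qed
  have "(\<Sum>i\<in>{1..2*m}. (2*m) div p^i) \<le> (\<Sum>i\<in>{1..2*m}. 2 * (m div p^i) + (if i \<le> e then 1 else 0))"
    by (intro sum_mono tm)
  also have "\<dots> = 2 * (\<Sum>i\<in>{1..2*m}. m div p^i) + card ({1..2*m} \<inter> {i. i \<le> e})"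
    by (simp add: sum.distrib sum_distrib_left sum.If_cases)
  also have "card ({1..2*m} \<inter> {i. i \<le> e}) \<le> card {1..e}"
    by (intro card_mono) auto
  finally have "multiplicity p ((2*m) choose m) \<le> e"
    using mult_central[OF p, of m] by simp
  then have "p ^ multiplicity p ((2*m) choose m) \<le> p^e" using p2 by (intro power_increasing) auto
  then show ?thesis using e by simp
qed

lemma central_le_pi:
  assumes m: "m \<ge> 1"
  shows "(2*m) choose m \<le> (2*m) ^ card {p::nat. prime p \<and> p \<le> 2*m}"
proof -
  define C where "C = (2*m) choose m"
  have C0: "C \<noteq> 0" unfolding C_def by (simp add: zero_less_binomial)
  have sub: "prime_factors C \<subseteq> {p. prime p \<and> p \<le> 2*m}"
  proof
    fix p assume pin: "p \<in> prime_factors C"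
    then have pp: "prime p" by auto
    have "multiplicity p C > 0" using pin C0 by (simp add: prime_factors_multiplicity)
    then have "p ^ 1 \<le> p ^ multiplicity p C" using prime_gt_0_nat[OF pp]
      by (intro power_increasing) auto
    also have "\<dots> \<le> 2*m" unfolding C_def by (rule central_mult_bound[OF pp m])
    finally show "p \<in> {p. prime p \<and> p \<le> 2*m}" using pp by simp
  qed
  have "C = (\<Prod>p\<in>prime_factors C. p ^ multiplicity p C)"
    using prod_prime_factors[OF C0] by simp
  also have "\<dots> \<le> (\<Prod>p\<in>prime_factors C. 2*m)"
    by (intro prod_mono) (auto simp: C_def intro: central_mult_bound[OF _ m])
  also have "\<dots> = (2*m) ^ card (prime_factors C)" by simp
  also have "\<dots> \<le> (2*m) ^ card {p::nat. prime p \<and> p \<le> 2*m}"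
    using m by (intro power_increasing card_mono sub) auto
  finally show ?thesis unfolding C_def .
qed

lemma cheb_low:
  assumes m: "m \<ge> 1"
  shows "4^m \<le> (2*m) ^ (card {p::nat. prime p \<and> p \<le> 2*m} + 1)"
proof -
  have "4^m / (2*real m) \<le> real ((2*m) choose m)" using m by (intro central_binomial_lower_bound) simp
  then have "real (4^m) \<le> real (((2*m) choose m) * (2*m))" using m by (simp add: field_simps)
  then have "4^m \<le> ((2*m) choose m) * (2*m)" by linarith
  also have "\<dots> \<le> (2*m) ^ card {p::nat. prime p \<and> p \<le> 2*m} * (2*m)"
    using central_le_pi[OF m] by simp
  also have "(2*m) ^ card {p::nat. prime p \<and> p \<le> 2*m} * (2*m) = (2*m) ^ (card {p::nat. prime p \<and> p \<le> 2*m} + 1)"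
    by (simp only: power_add power_one_right)
  finally show ?thesis .
qed

lemma ln2_ge: "1/2 \<le> ln (2::real)"
  using ln_add1_ge[of 1] by simp

lemma pr_lower: "real (j+1) * ln (real j + 2) \<le> 8 * real (pr j)"
proof -
  define m where "m = (j+1) div 2"
  have mj: "m \<le> j" unfolding m_def by simp
  have inj: "inj_on pr {m..j}" using pr_inj by (simp add: inj_on_def inj_def)
  have "(\<Prod>i\<in>{m..j}. pr i) = \<Prod>(pr ` {m..j})" using prod.reindex[OF inj, of id] by simp
  also have "\<dots> dvd \<Prod>{p. prime p \<and> p \<le> pr j}"
  proof (intro prod_dvd_prod_subset)
    show "finite {p. prime p \<and> p \<le> pr j}" by simp
    show "pr ` {m..j} \<subseteq> {p. prime p \<and> p \<le> pr j}"
    proof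
      fix x assume "x \<in> pr ` {m..j}"
      then obtain i where i: "i \<in> {m..j}" "x = pr i" by auto
      have "pr i \<le> pr j" using i pr_mono[of i j] by (cases "i = j") auto
      then show "x \<in> {p. prime p \<and> p \<le> pr j}" using i pr_prime by auto
    qed
  qed
  finally have "(\<Prod>i\<in>{m..j}. pr i) \<le> \<Prod>{p. prime p \<and> p \<le> pr j}"
    by (rule dvd_imp_le) (simp add: prime_gt_0_nat)
  also have "\<dots> \<le> 4 ^ pr j" by (rule prod_primes_le)
  finally have A: "(\<Prod>i\<in>{m..j}. pr i) \<le> 4 ^ pr j" .
  have "(m+2) ^ card {m..j} = (\<Prod>i\<in>{m..j}. m+2)" by simp
  also have "\<dots> \<le> (\<Prod>i\<in>{m..j}. pr i)"
  proof (intro prod_mono conjI)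
    fix i assume "i \<in> {m..j}"
    then have "pr m \<le> pr i" using pr_mono[of m i] by (cases "m = i") auto
    then show "m + 2 \<le> pr i" using pr_ge[of m] by simp
  qed simp
  finally have "(m+2) ^ (j+1-m) \<le> 4 ^ pr j" using A by simp
  then have "real ((m+2) ^ (j+1-m)) \<le> real (4 ^ pr j)" by (subst of_nat_le_iff)
  then have "ln (real ((m+2) ^ (j+1-m))) \<le> ln (real (4 ^ pr j))"
    by (intro ln_mono) auto
  then have B: "real (j+1-m) * ln (2 + real m) \<le> real (pr j) * ln 4"
    by (simp add: ln_realpow)
  have "2*(j+1-m) \<ge> j+1" unfolding m_def by presburger
  then have "real (2*(j+1-m)) \<ge> real (j+1)" by (subst of_nat_le_iff)
  then have C1: "real (j+1-m) \<ge> real (j+1) / 2" by simp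
  have "(real m + 2)^2 \<ge> real j + 2"
  proof -
    have "2*m \<ge> j" unfolding m_def by presburger
    then have "real (2*m) \<ge> real j" by (subst of_nat_le_iff)
    then have "real m \<ge> real j / 2" by simp
    then have "(real m + 2)^2 \<ge> (real j/2 + 2)^2" by (intro power_mono) auto
    moreover have "(real j/2 + 2)^2 \<ge> real j + 2" by (simp add: power2_eq_square field_simps)
    ultimately show ?thesis by linarith
  qed
  then have "ln ((real m + 2)^2) \<ge> ln (real j + 2)" by (intro ln_mono) auto
  then have C2: "ln (2 + real m) \<ge> ln (real j + 2) / 2" by (simp add: ln_realpow add.commute)
  have l4: "ln (4::real) \<le> 2"
  proof -
    have "ln (4::real) = ln (2^2)" by simp
    also have "\<dots> = 2 * ln 2" by (simp only: ln_realpow)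
    finally show ?thesis using ln_2_less_1 by simp
  qed
  have lj: "ln (real j + 2) \<ge> 0" by simp
  have "real (j+1) * ln (real j + 2) = 4 * ((real (j+1) / 2) * (ln (real j + 2) / 2))" by simp
  also have "\<dots> \<le> 4 * (real (j+1-m) * ln (2 + real m))"
    using C1 C2 lj by (intro mult_left_mono mult_mono) auto
  also have "\<dots> \<le> 4 * (real (pr j) * ln 4)" using B by simp
  also have "\<dots> \<le> 4 * (real (pr j) * 2)" using l4 by (intro mult_left_mono) auto
  finally show ?thesis by simp
qed

lemma pr_upper: "real (pr i) \<le> 34 * real (i+1) * ln (real i + 2)"
proof -
  define L where "L = ln (real i + 2)"
  have L2: "L \<ge> ln 2" unfolding L_def by (intro ln_mono) auto
  have Lh: "L \<ge> 1/2" using L2 ln2_ge by simp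
  have Lx: "L \<le> real i + 2" unfolding L_def using ln_le_minus_one[of "real i + 2"] by simp
  define m where "m = nat \<lceil>15 * real (i+1) * L\<rceil>"
  have X0: "15 * real (i+1) * L \<ge> 0" using Lh by simp
  then have mX: "real m = of_int \<lceil>15 * real (i+1) * L\<rceil>" unfolding m_def by simp
  have m_ge: "real m \<ge> 15 * real (i+1) * L" using mX ceiling_correct by simp
  have m_lt: "real m < 15 * real (i+1) * L + 1" using mX ceiling_correct[of "15 * real (i+1) * L"] by linarith
  have m1: "m \<ge> 1"
  proof -
    have "15 * real (i+1) * L \<ge> 15 * 1 * (1/2)" using Lh by (intro mult_mono) auto
    then show ?thesis using m_ge by linarith
  qed
  have "pr i \<le> 2*m"
  proof (rule ccontr)
    assume "\<not> pr i \<le> 2*m"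
    then have big: "2*m < pr i" by simp
    have sub: "{p::nat. prime p \<and> p \<le> 2*m} \<subseteq> pr ` {..<i}"
    proof
      fix p assume "p \<in> {p::nat. prime p \<and> p \<le> 2*m}"
      then have p: "prime p" "p \<le> 2*m" by auto
      obtain j where j: "pr j = p" using pr_surj[OF p(1)] by blast
      then have "pr j < pr i" using p big by simp
      then have "j < i" by (simp add: pr_mono_iff)
      then show "p \<in> pr ` {..<i}" using j by auto
    qed
    have "card {p::nat. prime p \<and> p \<le> 2*m} \<le> card (pr ` {..<i})" by (intro card_mono sub) auto
    also have "\<dots> \<le> i" using card_image_le[of "{..<i}" pr] by simp
    finally have cp: "card {p::nat. prime p \<and> p \<le> 2*m} + 1 \<le> i + 1" by simp
    have "4^m \<le> (2*m) ^ (card {p::nat. prime p \<and> p \<le> 2*m} + 1)" by (rule cheb_low[OF m1])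
    also have "\<dots> \<le> (2*m) ^ (i+1)" using m1 cp by (intro power_increasing) auto
    finally have "real (4^m) \<le> real ((2*m)^(i+1))" by (subst of_nat_le_iff)
    then have "ln (real (4^m)) \<le> ln (real ((2*m)^(i+1)))" by (intro ln_mono) auto
    moreover have "ln (real (4^m)) = real m * ln 4"
    proof -
      have "real (4^m) = (4::real)^m" by simp
      then show ?thesis by (simp only: ln_realpow)
    qed
    moreover have "ln (real ((2*m)^(i+1))) = real (i+1) * ln (2 * real m)"
    proof -
      have "real ((2*m)^(i+1)) = (2 * real m)^(i+1)" by simp
      moreover have "(0::real) < 2 * real m" using m1 by simp
      ultimately show ?thesis by (simp only: ln_realpow)
    qed
    ultimately have E: "real m * ln 4 \<le> real (i+1) * ln (2 * real m)" by simp
    define B where "B = (real i + 2)^2"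
    have B1: "1 \<le> B" unfolding B_def using one_le_power[of "real i + 2" 2] by simp
    have AB: "real (i+1) * L \<le> B" unfolding B_def power2_eq_square using Lx Lh by (intro mult_mono) auto
    have "2 * real m < 30 * (real (i+1) * L) + 2" using m_lt by (simp add: algebra_simps)
    also have "\<dots> \<le> 32 * B" using AB B1 by linarith
    also have "\<dots> = 2^5 * (real i + 2)^2" unfolding B_def by simp
    finally have "ln (2 * real m) < ln (2^5 * (real i + 2)^2)" using m1 by (intro ln_less_cancel_iff[THEN iffD2]) auto
    also have "\<dots> = 5 * ln 2 + 2 * L"
    proof -
      have l32: "ln ((2::real)^5) = 5 * ln 2" by (simp only: ln_realpow; simp)
      have "ln ((2::real)^5 * (real i + 2)^2) = ln ((2::real)^5) + ln ((real i + 2)^2)"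
        by (rule ln_mult_pos) auto
      also have "ln ((real i + 2)^2) = 2 * L" unfolding L_def by (simp only: ln_realpow; simp)
      finally show ?thesis using l32 by simp
    qed
    also have "\<dots> \<le> 7 * L" using L2 by simp
    finally have F: "ln (2 * real m) < 7 * L" .
    have l4: "ln (4::real) = 2 * ln 2"
    proof -
      have "ln (4::real) = ln (2^2)" by simp
      also have "\<dots> = 2 * ln 2" by (simp only: ln_realpow)
      finally show ?thesis .
    qed
    have "real (i+1) * ln (2 * real m) \<le> real (i+1) * (7 * L)" using F by (intro mult_left_mono) auto
    also have "\<dots> = 7 * (real (i+1) * L)" by (simp add: ac_simps)
    also have "\<dots> < 15 * (real (i+1) * L)"
    proof -
      have "real (i+1) * L > 0" using Lh by simp
      then show ?thesis by linarith
    qed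
    also have "\<dots> = 15 * real (i+1) * L" by (simp add: ac_simps)
    also have "\<dots> \<le> real m * 1" using m_ge by simp
    also have "\<dots> \<le> real m * ln 4" using l4 ln2_ge by (intro mult_left_mono) auto
    finally show False using E by simp
  qed
  then have "real (pr i) \<le> 2 * real m" by simp
  also have "\<dots> \<le> 30 * real (i+1) * L + 2" using m_lt by linarith
  also have "\<dots> = 30 * (real (i+1) * L) + 2" by (simp add: ac_simps)
  also have "\<dots> \<le> 34 * (real (i+1) * L)"
  proof -
    have "real (i+1) * L \<ge> 1 * (1/2)" using Lh by (intro mult_mono) auto
    then show ?thesis by linarith
  qed
  also have "\<dots> = 34 * real (i+1) * L" by (simp add: ac_simps)
  finally show ?thesis unfolding L_def .
qed

lemma prod_mono_card:
  fixes f :: "nat \<Rightarrow> real"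
  assumes mono: "\<And>a b. a \<le> b \<Longrightarrow> f a \<le> f b" and nn: "\<And>i. f i \<ge> 0"
  shows "finite J \<Longrightarrow> (\<Prod>i<card J. f i) \<le> (\<Prod>j\<in>J. f j)"
proof (induction "card J" arbitrary: J)
  case 0 then show ?case by simp
next
  case (Suc k J)
  have ne: "J \<noteq> {}" using Suc.hyps(2) by auto
  define m where "m = Max J"
  have mJ: "m \<in> J" unfolding m_def using Max_in[OF Suc.prems ne] .
  have cardJ': "card (J - {m}) = k" using Suc.hyps(2) mJ Suc.prems by simp
  have "J \<subseteq> {..m}" unfolding m_def using Max_ge[OF Suc.prems] by auto
  then have "card J \<le> card {..m}" by (intro card_mono) auto
  then have km: "k \<le> m" using Suc.hyps(2) by simp
  have IH: "(\<Prod>i<k. f i) \<le> (\<Prod>j\<in>J - {m}. f j)"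
    using Suc.hyps(1)[of "J - {m}"] cardJ' Suc.prems by simp
  have "(\<Prod>i<card J. f i) = (\<Prod>i<k. f i) * f k" using Suc.hyps(2)[symmetric] by simp
  also have "\<dots> \<le> (\<Prod>j\<in>J - {m}. f j) * f m"
    using IH mono[OF km] nn by (intro mult_mono prod_nonneg) auto
  also have "\<dots> = (\<Prod>j\<in>J. f j)"
    using prod.remove[OF Suc.prems mJ, of f] by (simp add: mult.commute)
  finally show ?case .
qed

lemma prod_ge_fact:
  "finite J \<Longrightarrow> fact (card J) \<le> (\<Prod>j\<in>J. real (j+1))"
proof -
  assume fin: "finite J"
  have "fact (card J) = (\<Prod>i<card J. real (i+1))"
    by (simp add: fact_prod_Suc atLeast0LessThan)
  also have "\<dots> \<le> (\<Prod>j\<in>J. real (j+1))" by (rule prod_mono_card[OF _ _ fin]) auto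
  finally show ?thesis .
qed

lemma telescope:
  assumes "1 \<le> a"
  shows "(\<Sum>j\<in>{a..<b}. 1/real j - 1/real (j+1)) \<le> 1 / real a"
proof (cases "a \<le> b")
  case True
  have "(\<Sum>j\<in>{a..<b}. 1/real j - 1/real (j+1)) = (\<Sum>j\<in>{a..<b}. (- 1/real (Suc j)) - (- 1/real j))"
    by (intro sum.cong) auto
  also have "\<dots> = (-1/real b) - (-1/real a)" by (rule sum_Suc_diff'[OF True])
  also have "\<dots> \<le> 1/real a" by simp
  finally show ?thesis .
next
  case False
  then show ?thesis by simp
qed

lemma weight_sum:
  assumes k: "k \<ge> 1"
  shows "(\<Sum>j\<in>{2*k..<B}. (real k / real (j+1))^2) \<le> real k / 2"
proof -
  have "(\<Sum>j\<in>{2*k..<B}. (real k / real (j+1))^2) \<le> (\<Sum>j\<in>{2*k..<B}. real k ^ 2 * (1/real j - 1/real (j+1)))"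
  proof (intro sum_mono)
    fix j assume "j \<in> {2*k..<B}"
    then have j: "j \<ge> 1" using k by simp
    have "1/real j - 1/real (j+1) = 1 / (real j * real (j+1))" using j by (simp add: field_simps)
    also have "\<dots> \<ge> 1 / (real (j+1) * real (j+1))" using j by (intro divide_left_mono mult_right_mono) auto
    finally have h: "1 / (real (j+1) * real (j+1)) \<le> 1/real j - 1/real (j+1)" .
    have "(real k / real (j+1))^2 = real k ^ 2 * (1 / (real (j+1) * real (j+1)))"
      by (simp add: power_divide power2_eq_square)
    also have "\<dots> \<le> real k ^ 2 * (1/real j - 1/real (j+1))"
      using h by (intro mult_left_mono) auto
    finally show "(real k / real (j+1))^2 \<le> real k ^ 2 * (1/real j - 1/real (j+1))" .
  qed
  also have "\<dots> = real k ^ 2 * (\<Sum>j\<in>{2*k..<B}. 1/real j - 1/real (j+1))" by (simp add: sum_distrib_left)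
  also have "\<dots> \<le> real k ^ 2 * (1 / real (2*k))" using k by (intro mult_left_mono telescope) auto
  also have "\<dots> = real k / 2" using k by (simp add: power2_eq_square)
  finally show ?thesis .
qed

lemma fact_le_pow_nat:
  assumes "r \<le> k"
  shows "fact k \<le> fact (k - r) * (k::nat) ^ r"
proof -
  have d: "fact (k - r) dvd (fact k :: nat)" by (rule fact_dvd) simp
  have "(fact k :: nat) = fact (k - r) * (fact k div fact (k - r))" using d by simp
  also have "\<dots> \<le> fact (k - r) * k ^ r" using fact_div_fact_le_pow[OF assms] by (intro mult_le_mono2)
  finally show ?thesis .
qed

lemma count_J:
  fixes k B :: nat and Y :: real
  assumes k: "k \<ge> 1" and Y: "Y \<ge> 1"
  shows "real (card {J \<in> Pow {..<B}. card J = k \<and> (\<Prod>j\<in>J. real (j+1)) \<le> Y * fact k})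
          \<le> 4^k * (Y^2 * exp (real k / 2))"
proof -
  define F where "F = {J \<in> Pow {..<B}. card J = k \<and> (\<Prod>j\<in>J. real (j+1)) \<le> Y * fact k}"
  define R where "R = {2*k..<B}"
  define w where "w = (\<lambda>j::nat. (real k / real (j+1))^2)"
  define G where "G = {A \<in> Pow R. (\<Prod>j\<in>A. real (j+1) / real k) \<le> Y}"
  have finR: "finite R" unfolding R_def by simp
  have finG: "finite G" unfolding G_def using finR by simp
  have key: "J - {..<2*k} \<in> G" if J: "J \<in> F" for J
  proof -
    have JB: "J \<subseteq> {..<B}" and cJ: "card J = k" and PJ: "(\<Prod>j\<in>J. real (j+1)) \<le> Y * fact k"
      using J unfolding F_def by auto
    have finJ: "finite J" using JB finite_subset by blast
    define J1 where "J1 = J \<inter> {..<2*k}"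
    define J2 where "J2 = J - {..<2*k}"
    have fin12: "finite J1" "finite J2" unfolding J1_def J2_def using finJ by auto
    have un: "J = J1 \<union> J2" and dj: "J1 \<inter> J2 = {}" unfolding J1_def J2_def by auto
    have cards: "card J1 + card J2 = k" using cJ un dj fin12 card_Un_disjoint by metis
    have sub: "J2 \<subseteq> R" unfolding J2_def R_def using JB by auto
    have P: "(\<Prod>j\<in>J. real (j+1)) = (\<Prod>j\<in>J1. real (j+1)) * (\<Prod>j\<in>J2. real (j+1))"
      using un dj fin12 by (simp add: prod.union_disjoint)
    have f1: "fact (card J1) \<le> (\<Prod>j\<in>J1. real (j+1))" by (rule prod_ge_fact[OF fin12(1)])
    have "fact k \<le> fact (k - card J2) * k ^ card J2" using cards by (intro fact_le_pow_nat) simp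
    then have "(fact k :: real) \<le> fact (card J1) * real k ^ card J2"
      using cards by (metis add_diff_cancel_right' of_nat_fact of_nat_le_iff of_nat_mult of_nat_power)
    have p2: "(\<Prod>j\<in>J2. real (j+1)) \<ge> 0" by (intro prod_nonneg) auto
    have fpos: "(fact (card J1) :: real) > 0" by simp
    have "fact (card J1) * (\<Prod>j\<in>J2. real (j+1)) \<le> (\<Prod>j\<in>J1. real (j+1)) * (\<Prod>j\<in>J2. real (j+1))"
      using f1 p2 by (intro mult_right_mono) auto
    also have "\<dots> \<le> Y * fact k" using P PJ by simp
    also have "\<dots> \<le> Y * (fact (card J1) * real k ^ card J2)"
      using \<open>(fact k :: real) \<le> fact (card J1) * real k ^ card J2\<close> Y by (intro mult_left_mono) auto
    also have "\<dots> = fact (card J1) * (Y * real k ^ card J2)" by simp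
    finally have "(\<Prod>j\<in>J2. real (j+1)) \<le> Y * real k ^ card J2"
      using fpos by (simp add: mult_le_cancel_left_pos)
    moreover have "(\<Prod>j\<in>J2. real (j+1) / real k) = (\<Prod>j\<in>J2. real (j+1)) / real k ^ card J2"
      by (simp add: prod_dividef)
    moreover have "real k ^ card J2 > 0" using k by simp
    ultimately have "(\<Prod>j\<in>J2. real (j+1) / real k) \<le> Y" by (simp add: divide_le_eq)
    then show ?thesis using sub unfolding G_def J2_def by auto
  qed
  have inj: "inj_on (\<lambda>J. (J \<inter> {..<2*k}, J - {..<2*k})) F"
  proof (rule inj_onI)
    fix J J' assume "(J \<inter> {..<2*k}, J - {..<2*k}) = (J' \<inter> {..<2*k}, J' - {..<2*k})"
    then have "J \<inter> {..<2*k} = J' \<inter> {..<2*k}" "J - {..<2*k} = J' - {..<2*k}" by auto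
    then show "J = J'" by blast
  qed
  have img: "(\<lambda>J. (J \<inter> {..<2*k}, J - {..<2*k})) ` F \<subseteq> Pow {..<2*k} \<times> G"
    using key by auto
  have "card F \<le> card (Pow {..<2*k} \<times> G)" by (rule card_inj_on_le[OF inj img]) (simp add: finG)
  also have "\<dots> = 2^(2*k) * card G" by (simp add: card_cartesian_product card_Pow)
  also have "(2::nat)^(2*k) = 4^k" by (simp add: power_mult)
  finally have "card F \<le> 4^k * card G" .
  then have "real (card F) \<le> real (4^k * card G)" by (subst of_nat_le_iff)
  then have cF: "real (card F) \<le> 4^k * real (card G)" by simp
  have cardG: "real (card G) \<le> Y^2 * exp (real k / 2)"
  proof -
    have "real (card G) = (\<Sum>A\<in>G. 1)" by simp
    also have "\<dots> \<le> (\<Sum>A\<in>G. Y^2 * (\<Prod>j\<in>A. w j))"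
    proof (rule sum_mono)
      fix A assume A: "A \<in> G"
      then have AR: "A \<subseteq> R" and PA: "(\<Prod>j\<in>A. real (j+1) / real k) \<le> Y" unfolding G_def by auto
      define P where "P = (\<Prod>j\<in>A. real (j+1) / real k)"
      define Q where "Q = (\<Prod>j\<in>A. real k / real (j+1))"
      have Ppos: "P > 0" unfolding P_def using k by (intro prod_pos) auto
      have "Q * P = (\<Prod>j\<in>A. real k / real (j+1) * (real (j+1) / real k))"
        unfolding P_def Q_def by (rule prod.distrib[symmetric])
      also have "\<dots> = 1" using k by (intro prod.neutral ballI) simp
      finally have QP: "Q * P = 1" .
      have "1 = Q * P" using QP by simp
      also have "\<dots> \<le> Q * Y" using PA P_def Ppos QP
        by (intro mult_left_mono) (auto simp: P_def, metis QP zero_less_mult_pos2 less_eq_real_def zero_less_one)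
      finally have QY: "1 \<le> Y * Q" by (simp add: mult.commute)
      have "(\<Prod>j\<in>A. w j) = Q^2" unfolding w_def Q_def by (simp add: prod_power_distrib)
      moreover have "1 \<le> (Y*Q)^2" using QY by (simp add: one_le_power)
      ultimately show "1 \<le> Y^2 * (\<Prod>j\<in>A. w j)" by (simp add: power_mult_distrib)
    qed
    also have "\<dots> \<le> (\<Sum>A\<in>Pow R. Y^2 * (\<Prod>j\<in>A. w j))"
    proof (rule sum_mono2)
      show "finite (Pow R)" using finR by simp
      show "G \<subseteq> Pow R" unfolding G_def by auto
      fix A assume "A \<in> Pow R - G"
      have "(\<Prod>j\<in>A. w j) \<ge> 0" unfolding w_def by (intro prod_nonneg) auto
      then show "0 \<le> Y^2 * (\<Prod>j\<in>A. w j)" by simp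
    qed
    also have "\<dots> = Y^2 * (\<Sum>A\<in>Pow R. (\<Prod>j\<in>A. w j))" by (simp add: sum_distrib_left)
    also have "(\<Sum>A\<in>Pow R. (\<Prod>j\<in>A. w j)) = (\<Prod>j\<in>R. w j + 1)"
      using prod_add[OF finR, of w "\<lambda>_. 1"] by simp
    also have "\<dots> \<le> (\<Prod>j\<in>R. exp (w j))"
      by (intro prod_mono conjI) (auto simp: w_def add.commute[of _ 1])
    also have "\<dots> = exp (\<Sum>j\<in>R. w j)" by (simp add: exp_sum finR)
    also have "\<dots> \<le> exp (real k / 2)" unfolding R_def w_def using weight_sum[OF k, of B] by simp
    finally show ?thesis using Y by simp
  qed
  have "real (card F) \<le> 4^k * (Y^2 * exp (real k / 2))"
  proof -
    have "4^k * real (card G) \<le> 4^k * (Y^2 * exp (real k / 2))"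
      using cardG by (intro mult_left_mono) auto
    then show ?thesis using cF by linarith
  qed
  then show ?thesis unfolding F_def .
qed

lemma sq_le_4pow: "((k::nat)+1)^2 \<le> 4^k"
proof (induction k)
  case 0 then show ?case by simp
next
  case (Suc k)
  have "(Suc k + 1)^2 \<le> 4 * (k+1)^2" by (simp add: power2_eq_square)
  also have "\<dots> \<le> 4 * 4^k" using Suc.IH by simp
  finally show ?case by simp
qed

lemma fact_prod_real: "(\<Prod>i<n. real (i+1)) = fact n"
  by (simp add: fact_prod_Suc atLeast0LessThan)

lemma J_bound:
  assumes fin: "finite J" and cJ: "card J = k"
    and lt: "(\<Prod>j\<in>J. pr j) < (\<Prod>i<Suc k. pr i)"
  shows "(\<Prod>j\<in>J. real (j+1)) \<le> (34 * 1088^k) * fact k"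
proof -
  define L where "L = (\<lambda>i::nat. ln (real i + 2))"
  have Lpos: "L i > 0" for i unfolding L_def by simp
  have Lmono: "a \<le> b \<Longrightarrow> L a \<le> L b" for a b unfolding L_def by (intro ln_mono) auto
  have PLk: "(\<Prod>i<k. L i) > 0" using Lpos by (intro prod_pos) auto
  have "(\<Prod>j\<in>J. real (j+1) * L j / 8) \<le> (\<Prod>j\<in>J. real (pr j))"
  proof (intro prod_mono conjI)
    fix j show "0 \<le> real (j+1) * L j / 8" using Lpos[of j] by simp
    show "real (j+1) * L j / 8 \<le> real (pr j)" using pr_lower[of j] unfolding L_def by simp
  qed
  also have "\<dots> = real (\<Prod>j\<in>J. pr j)" by simp
  also have "\<dots> \<le> real (\<Prod>i<Suc k. pr i)" using lt by (simp only: of_nat_le_iff less_imp_le)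
  also have "\<dots> = (\<Prod>i<Suc k. real (pr i))" by simp
  also have "\<dots> \<le> (\<Prod>i<Suc k. 34 * (real (i+1) * L i))"
  proof (intro prod_mono conjI)
    fix i show "0 \<le> real (pr i)" by simp
    show "real (pr i) \<le> 34 * (real (i+1) * L i)" using pr_upper[of i] unfolding L_def by (simp only: mult.assoc)
  qed
  also have "\<dots> = 34^(Suc k) * ((\<Prod>i<Suc k. real (i+1)) * (\<Prod>i<Suc k. L i))"
    by (simp add: prod.distrib)
  also have "(\<Prod>i<Suc k. real (i+1)) = fact (Suc k)"
    by (rule fact_prod_real)
  also have "(\<Prod>i<Suc k. L i) = (\<Prod>i<k. L i) * L k" by simp
  finally have A: "(\<Prod>j\<in>J. real (j+1) * L j / 8) \<le> 34^(Suc k) * (fact (Suc k) * ((\<Prod>i<k. L i) * L k))" .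
  have "(\<Prod>j\<in>J. real (j+1) * L j / 8) = (\<Prod>j\<in>J. real (j+1)) * (\<Prod>j\<in>J. L j) / 8^k"
    using cJ by (simp add: prod.distrib prod_dividef)
  moreover have "(\<Prod>j\<in>J. L j) \<ge> (\<Prod>i<k. L i)"
    using prod_mono_card[of L J, OF Lmono _ fin] Lpos cJ by (simp add: less_imp_le)
  moreover have "(\<Prod>j\<in>J. real (j+1)) \<ge> 0" by (intro prod_nonneg) auto
  ultimately have D0: "(\<Prod>j\<in>J. real (j+1)) * (\<Prod>i<k. L i) / 8^k \<le> (\<Prod>j\<in>J. real (j+1) * L j / 8)"
    by (simp add: divide_right_mono mult_left_mono)
  define X where "X = (\<Prod>j\<in>J. real (j+1))"
  define Pk where "Pk = (\<Prod>i<k. L i)"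
  define Q where "Q = (\<Prod>j\<in>J. real (j+1) * L j / 8)"
  define M where "M = (8::real)^k * 34^(Suc k) * fact (Suc k) * L k"
  have A': "Q \<le> 34^(Suc k) * (fact (Suc k) * (Pk * L k))" using A unfolding Q_def Pk_def .
  have D': "X * Pk / 8^k \<le> Q" using D0 unfolding X_def Pk_def Q_def .
  have "X * Pk = 8^k * (X * Pk / 8^k)" by simp
  also have "\<dots> \<le> 8^k * Q" using D' by (intro mult_left_mono) auto
  also have "\<dots> \<le> 8^k * (34^(Suc k) * (fact (Suc k) * (Pk * L k)))" using A' by (intro mult_left_mono) auto
  also have "\<dots> = M * Pk" unfolding M_def by (simp add: ac_simps)
  finally have "X * Pk \<le> M * Pk" .
  then have C: "X \<le> M" using PLk unfolding Pk_def by (simp add: mult_le_cancel_right_pos)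
  have Lk: "L k \<le> real k + 1" unfolding L_def using ln_le_minus_one[of "real k + 2"] by simp
  have sq: "(real k + 1) * (real k + 1) \<le> 4^k"
  proof -
    have "real ((k+1)^2) \<le> real (4^k)" using sq_le_4pow[of k] by (subst of_nat_le_iff)
    then show ?thesis by (simp add: power2_eq_square algebra_simps)
  qed
  have "M = 8^k * 34^(Suc k) * fact k * ((real k + 1) * L k)"
    unfolding M_def by (simp add: algebra_simps)
  also have "\<dots> \<le> 8^k * 34^(Suc k) * fact k * ((real k + 1) * (real k + 1))"
    using Lk Lpos[of k] by (intro mult_left_mono) auto
  also have "\<dots> \<le> 8^k * 34^(Suc k) * fact k * 4^k"
    using sq by (intro mult_left_mono) auto
  also have "\<dots> = (34 * 1088^k) * fact k"
    by (simp add: power_mult_distrib[symmetric] algebra_simps)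
  finally show ?thesis using C unfolding X_def by linarith
qed

lemma Delta_finite: "finite (Delta n)"
proof -
  have "Delta n = prime_factors ` {k. 1 \<le> k \<and> k \<le> n \<and> squarefree k}"
    unfolding Delta_def by auto
  then show ?thesis by simp
qed

lemma prod_sqf: "squarefree (m::nat) \<Longrightarrow> \<Prod>(prime_factors m) = m"
proof -
  assume sq: "squarefree m"
  then have m0: "m \<noteq> 0" by (metis not_squarefree_0)
  have "m = (\<Prod>p\<in>prime_factors m. p ^ multiplicity p m)" using prod_prime_factors[OF m0] by simp
  also have "\<dots> = (\<Prod>p\<in>prime_factors m. p)"
    using sq m0 by (intro prod.cong refl) (simp add: squarefree_factorial_semiring')
  finally show ?thesis by simp
qed

lemma ftop_bound:
  "real (ftop n) \<le> 4^(dimDelta n + 1) * ((34 * 1088^(dimDelta n + 1))^2 * exp (real (dimDelta n + 1) / 2))"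
proof -
  define k where "k = dimDelta n + 1"
  define T where "T = {s \<in> Delta n. card s = k}"
  have ftop_eq: "ftop n = card T" unfolding ftop_def T_def k_def by simp
  have k1: "k \<ge> 1" unfolding k_def by simp
  define Y where "Y = (34::real) * 1088^k"
  have Y1: "Y \<ge> 1"
  proof -
    have "(1::real) \<le> 1088^k" by (rule one_le_power) simp
    then show ?thesis unfolding Y_def by linarith
  qed
  show ?thesis
  proof (cases "T = {}")
    case True
    then show ?thesis using ftop_eq by simp
  next
    case False
    then obtain s0 where s0: "s0 \<in> Delta n" "card s0 = k" unfolding T_def by auto
    have fD: "finite (card ` Delta n)" using Delta_finite by simp
    have "k \<le> Max (card ` Delta n)" using s0 fD by (intro Max_ge) auto
    then have Mk: "Max (card ` Delta n) = k" using k_def unfolding dimDelta_def by linarith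
    define P where "P = (\<Prod>i<Suc k. pr i)"
    have nP: "n < P"
    proof (rule ccontr)
      assume "\<not> n < P"
      then have Pn: "P \<le> n" by simp
      have sqP: "squarefree P" unfolding P_def
      proof (rule squarefree_prod_coprime)
        fix a b assume "a \<in> {..<Suc k}" "b \<in> {..<Suc k}" "a \<noteq> b"
        then have "pr a \<noteq> pr b" using pr_inj by (auto simp: inj_def)
        then show "coprime (pr a) (pr b)" using pr_prime by (intro primes_coprime) auto
      next
        fix a show "squarefree (pr a)" using pr_prime by (intro squarefree_prime) auto
      qed
      have pfP: "prime_factors P = pr ` {..<Suc k}"
      proof -
        have nz: "0 \<notin> pr ` {..<Suc k}"
        proof
          assume "0 \<in> pr ` {..<Suc k}"
          then obtain x where "pr x = 0" by auto
          with pr_ge[of x] show False by simp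
        qed
        have "prime_factors P = (\<Union>i\<in>{..<Suc k}. prime_factors (pr i))" unfolding P_def
          by (subst prime_factors_prod[OF _ nz]) auto
        also have "\<dots> = (\<Union>i\<in>{..<Suc k}. {pr i})" using pr_prime by (simp add: prime_prime_factors)
        finally show ?thesis by auto
      qed
      have P1: "1 \<le> P" unfolding P_def using pr_prime by (simp add: prime_gt_0_nat Suc_leI prod_pos)
      have "prime_factors P \<in> Delta n" unfolding Delta_def using Pn sqP P1 by auto
      moreover have "card (prime_factors P) = Suc k" unfolding pfP using pr_inj
        by (simp add: card_image inj_on_def inj_def)
      ultimately have "Suc k \<le> Max (card ` Delta n)" using fD by (metis Max_ge image_eqI)
      then show False using Mk by simp
    qed
    define F where "F = {J \<in> Pow {..<P}. card J = k \<and> (\<Prod>j\<in>J. real (j+1)) \<le> Y * fact k}"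
    have finF: "finite F" unfolding F_def by simp
    define \<phi> where "\<phi> = (\<lambda>s::nat set. {j. pr j \<in> s})"
    have props: "pr ` \<phi> s = s \<and> \<phi> s \<in> F" if sT: "s \<in> T" for s
    proof -
      obtain m where m: "s = prime_factors m" "1 \<le> m" "m \<le> n" "squarefree m" and cs: "card s = k"
        using sT unfolding T_def Delta_def by auto
      have prs: "\<And>p. p \<in> s \<Longrightarrow> prime p" using m by auto
      have fins: "finite s" using m by simp
      have img: "pr ` \<phi> s = s"
      proof
        show "pr ` \<phi> s \<subseteq> s" unfolding \<phi>_def by auto
        show "s \<subseteq> pr ` \<phi> s"
        proof
          fix p assume "p \<in> s"
          then obtain i where "pr i = p" using pr_surj prs by blast
          then show "p \<in> pr ` \<phi> s" unfolding \<phi>_def using \<open>p \<in> s\<close> by auto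
        qed
      qed
      have injJ: "inj_on pr (\<phi> s)" using pr_inj by (simp add: inj_on_def inj_def)
      have prodS: "\<Prod>s = m" using prod_sqf[OF m(4)] m(1) by simp
      have sub: "\<phi> s \<subseteq> {..<P}"
      proof
        fix j assume "j \<in> \<phi> s"
        then have js: "pr j \<in> s" unfolding \<phi>_def by simp
        have "pr j dvd \<Prod>s" using fins js by (intro dvd_prod_eqI) auto
        then have "pr j \<le> \<Prod>s" using prodS m(2) by (intro dvd_imp_le) auto
        then have "pr j < P" using prodS m(3) nP by simp
        moreover have "j < pr j" using pr_ge[of j] by simp
        ultimately show "j \<in> {..<P}" by simp
      qed
      have finJ: "finite (\<phi> s)" using sub finite_subset by blast
      have cJ: "card (\<phi> s) = k" using card_image[OF injJ] img cs by simp
      have "(\<Prod>j\<in>\<phi> s. pr j) = \<Prod>(pr ` \<phi> s)" using prod.reindex[OF injJ, of id] by simp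
      also have "\<dots> = m" using img prodS by simp
      finally have "(\<Prod>j\<in>\<phi> s. pr j) < (\<Prod>i<Suc k. pr i)" using m(3) nP unfolding P_def by simp
      then have "(\<Prod>j\<in>\<phi> s. real (j+1)) \<le> Y * fact k" unfolding Y_def by (rule J_bound[OF finJ cJ])
      then have "\<phi> s \<in> F" unfolding F_def using sub cJ by auto
      then show ?thesis using img by simp
    qed
    have inj: "inj_on \<phi> T"
    proof (rule inj_onI)
      fix s t assume "s \<in> T" "t \<in> T" "\<phi> s = \<phi> t"
      then show "s = t" using props by metis
    qed
    have "card T \<le> card F" using props by (intro card_inj_on_le[OF inj _ finF]) auto
    then have "real (card T) \<le> real (card F)" by simp
    also have "\<dots> \<le> 4^k * (Y^2 * exp (real k / 2))" unfolding F_def by (rule count_J[OF k1 Y1])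
    finally show ?thesis using ftop_eq unfolding Y_def k_def by simp
  qed
qed

theorem proposition3p4:
  shows "\<exists>C::real. C > 0 \<and> (\<lambda>n. real (ftop n)) \<in> O(\<lambda>n. C ^ dimDelta n)"
proof -
  define C where "C = 4 * 1088^2 * exp (1/2::real)"
  have Cpos: "C > 0" unfolding C_def by simp
  have bound: "real (ftop n) \<le> (34^2 * C) * C ^ dimDelta n" for n
  proof -
    define d where "d = dimDelta n"
    have "real (ftop n) \<le> 4^(d + 1) * ((34 * 1088^(d + 1))^2 * exp (real (d + 1) / 2))"
      using ftop_bound[of n] unfolding d_def .
    also have "\<dots> = 34^2 * (4 * 1088^2 * exp (1/2))^(d+1)"
    proof -
      have e: "exp (real (d + 1) / 2) = exp (1/2) ^ (d+1)"
        by (subst exp_of_nat_mult[symmetric]) simp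
      have g: "(a::real)^n * (s * b^n * c^n) = s * (a*b*c)^n" for a b c s n
        by (simp add: power_mult_distrib ac_simps)
      have h: "((1088::real)^(d+1))^2 = (1088^2)^(d+1)" by (simp only: power_mult[symmetric] mult.commute)
      have "(34 * (1088::real)^(d+1))^2 = 34^2 * (1088^2)^(d+1)" by (simp only: power_mult_distrib h)
      then show ?thesis using e g[of 4 "d+1" "34^2" "1088^2" "exp (1/2)"] by simp
    qed
    also have "\<dots> = (34^2 * C) * C ^ d" unfolding C_def by (simp add: ac_simps)
    finally show ?thesis unfolding d_def .
  qed
  have "(\<lambda>n. real (ftop n)) \<in> O(\<lambda>n. C ^ dimDelta n)"
  proof (rule bigoI[where c = "34^2 * C"])
    show "\<forall>\<^sub>F n in at_top. norm (real (ftop n)) \<le> 34^2 * C * norm (C ^ dimDelta n)"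
      using bound Cpos by (intro always_eventually allI) (simp add: abs_of_pos)
  qed
  then show ?thesis using Cpos by blast
qed

end
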